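(* Let $(\mathcal{M},\times,1)$ be a cartesian monoidal category with equivalences. Let $Y:\Gamma^{\mathrm{op}}\to\mathcal{M}$ be a functor and let $(X,\xi):(\Phi,+,0)\to(\mathcal{M},\times,1)$ be the colax symmetric monoidal functor corresponding to $Y$ (as described in the context). The following are equivalent: (1) $(X,\xi)$ is a homotopy commutative monoid in $\mathcal{M}$, i.e. $\xi_0$ and every $\xi_{m,n}$ ($m,n\ge0$) are equivalences; (2) for all $m,n\ge 0$ the map $(Y(\pi^1_{m,n}),Y(\pi^2_{m,n})):Y[m+n]\to Y[m]\times Y[n]$ is an equivalence, and so is the unique map $Y[0]\to 1$; (3) for every $n\ge 0$ the map $(Y(\rho^n_0),\dots,Y(\rho^n_{n-1})):Y[n]\to Y[1]^n$ is an equivalence.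
   Context: A monoidal category with equivalences is a monoidal category $\mathcal{M}$ with a class $\mathcal{E}$ of morphisms (the equivalences) such that: every isomorphism is in $\mathcal{E}$; if $h=g\circ f$ and two of $f,g,h$ are in $\mathcal{E}$ then so is the third; if $f,f'\in\mathcal{E}$ then $f\otimes f'\in\mathcal{E}$. It is cartesian if the monoidal structure is given by chosen binary products $\times$ and a terminal object $1$. $\Phi$: objects $n=\{0,\dots,n-1\}$ ($n\ge0$), all functions, symmetric monoidal under disjoint union $+$ with unit $0$. $\Gamma^{\mathrm{op}}$: objects $[n]=\{0,\dots,n\}$, morphisms basepoint-preserving functions ($g(0)=0$). Maps in $\Gamma^{\mathrm{op}}$: $\pi^1_{m,n}:[m+n]\to[m]$, $\pi^1_{m,n}(i)=i$ for $i\le m$ and $0$ for $i>m$; $\pi^2_{m,n}:[m+n]\to[n]$, $\pi^2_{m,n}(i)=0$ for $i\le m$ and $i-m$ for $i>m$; for $0\le j<n$, $\rho^n_j:[n]\to[1]$, $\rho^n_j(i)=1$ if $i=j+1$ and $0$ otherwise. Correspondence: given $Y$, set $X(n)=Y[n]$; for $f:n\to n'$ in $\Phi$ set $X(f)=Y(g_f)$ where $g_f:[n]\to[n']$, $g_f(0)=0$, $g_f(i)=1+f(i-1)$ for $1\le i\le n$; $\xi_0:X(0)\to 1$ is the unique map; $\xi_{m,n}=(Y(\pi^1_{m,n}),Y(\pi^2_{m,n})):X(m+n)\to X(m)\times X(n)$. This defines a colax symmetric monoidal functor (a functor $X$ with natural maps $\xi_{A,B}:X(A+B)\to X(A)\times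 X(B)$, $\xi_0:X(0)\to 1$ satisfying the coassociativity, counit and symmetry axioms of a symmetric monoidal functor, not necessarily invertible), and every colax symmetric monoidal functor $(\Phi,+,0)\to(\mathcal{M},\times,1)$ arises from exactly one $Y$ in this way. *)

theory Defs
  imports Main
begin

record ('o,'m) cat =
  Obj :: "'o set"
  Arr :: "'m set"
  Dom :: "'m \<Rightarrow> 'o"
  Cod :: "'m \<Rightarrow> 'o"
  Id  :: "'o \<Rightarrow> 'm"
  Comp :: "'m \<Rightarrow> 'm \<Rightarrow> 'm"   (* Comp C g f = g \<circ> f *)

definition hom :: "('o,'m) cat \<Rightarrow> 'o \<Rightarrow> 'o \<Rightarrow> 'm set" where
  "hom C a b = {f \<in> Arr C. Dom C f = a \<and> Cod C f = b}"

definition category :: "('o,'m) cat \<Rightarrow> bool" where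
  "category C \<longleftrightarrow>
     (\<forall>f\<in>Arr C. Dom C f \<in> Obj C \<and> Cod C f \<in> Obj C) \<and>
     (\<forall>a\<in>Obj C. Id C a \<in> hom C a a) \<and>
     (\<forall>f\<in>Arr C. \<forall>g\<in>Arr C. Cod C f = Dom C g \<longrightarrow>
         Comp C g f \<in> hom C (Dom C f) (Cod C g)) \<and>
     (\<forall>f\<in>Arr C. Comp C (Id C (Cod C f)) f = f \<and> Comp C f (Id C (Dom C f)) = f) \<and>
     (\<forall>f\<in>Arr C. \<forall>g\<in>Arr C. \<forall>h\<in>Arr C. Cod C f = Dom C g \<longrightarrow> Cod C g = Dom C h \<longrightarrow>
         Comp C h (Comp C g f) = Comp C (Comp C h g) f)"

definition iso :: "('o,'m) cat \<Rightarrow> 'm \<Rightarrow> bool" where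
  "iso C f \<longleftrightarrow> f \<in> Arr C \<and> (\<exists>g \<in> hom C (Cod C f) (Dom C f).
      Comp C g f = Id C (Dom C f) \<and> Comp C f g = Id C (Cod C f))"

record ('o,'m) cartesian =
  Prod :: "'o \<Rightarrow> 'o \<Rightarrow> 'o"
  Pr1  :: "'o \<Rightarrow> 'o \<Rightarrow> 'm"
  Pr2  :: "'o \<Rightarrow> 'o \<Rightarrow> 'm"
  Pair :: "'m \<Rightarrow> 'm \<Rightarrow> 'm"
  Term :: "'o"
  Bang :: "'o \<Rightarrow> 'm"

definition cartesian_structure :: "('o,'m) cat \<Rightarrow> ('o,'m) cartesian \<Rightarrow> bool" where
  "cartesian_structure C K \<longleftrightarrow>
     (\<forall>a\<in>Obj C. \<forall>b\<in>Obj C. Prod K a b \<in> Obj C \<and>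
        Pr1 K a b \<in> hom C (Prod K a b) a \<and> Pr2 K a b \<in> hom C (Prod K a b) b) \<and>
     (\<forall>a\<in>Obj C. \<forall>b\<in>Obj C. \<forall>c\<in>Obj C. \<forall>f\<in>hom C c a. \<forall>g\<in>hom C c b.
        Pair K f g \<in> hom C c (Prod K a b) \<and>
        Comp C (Pr1 K a b) (Pair K f g) = f \<and> Comp C (Pr2 K a b) (Pair K f g) = g \<and>
        (\<forall>h\<in>hom C c (Prod K a b). Comp C (Pr1 K a b) h = f \<and> Comp C (Pr2 K a b) h = g
             \<longrightarrow> h = Pair K f g)) \<and>
     Term K \<in> Obj C \<and>
     (\<forall>a\<in>Obj C. Bang K a \<in> hom C a (Term K) \<and> (\<forall>h\<in>hom C a (Term K). h = Bang K a))"

definition tensor :: "('o,'m) cat \<Rightarrow> ('o,'m) cartesian \<Rightarrow> 'm \<Rightarrow> 'm \<Rightarrow> 'm" where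
  "tensor C K f f' = Pair K (Comp C f (Pr1 K (Dom C f) (Dom C f')))
                            (Comp C f' (Pr2 K (Dom C f) (Dom C f')))"

definition cartesian_cat_with_equivalences ::
  "('o,'m) cat \<Rightarrow> ('o,'m) cartesian \<Rightarrow> 'm set \<Rightarrow> bool" where
  "cartesian_cat_with_equivalences C K E \<longleftrightarrow>
     category C \<and> cartesian_structure C K \<and> E \<subseteq> Arr C \<and>
     (\<forall>f. iso C f \<longrightarrow> f \<in> E) \<and>
     (\<forall>f\<in>Arr C. \<forall>g\<in>Arr C. Cod C f = Dom C g \<longrightarrow>
        ((f \<in> E \<and> g \<in> E \<longrightarrow> Comp C g f \<in> E) \<and>
         (f \<in> E \<and> Comp C g f \<in> E \<longrightarrow> g \<in> E) \<and>
         (g \<in> E \<and> Comp C g f \<in> E \<longrightarrow> f \<in> E))) \<and>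
     (\<forall>f\<in>E. \<forall>f'\<in>E. tensor C K f f' \<in> E)"

text \<open>A morphism [m] \<rightarrow> [n] of Gamma^op is represented by a function g :: nat \<Rightarrow> nat
  with g 0 = 0 and g i \<le> n for i \<le> m; only its values on {0..m} matter.\<close>
definition Gamma_hom :: "nat \<Rightarrow> nat \<Rightarrow> (nat \<Rightarrow> nat) \<Rightarrow> bool" where
  "Gamma_hom m n g \<longleftrightarrow> g 0 = 0 \<and> (\<forall>i\<le>m. g i \<le> n)"

text \<open>Yo n = Y[n]; Ym m n g = Y(g) for g : [m] \<rightarrow> [n].\<close>
definition Gop_functor ::
  "('o,'m) cat \<Rightarrow> (nat \<Rightarrow> 'o) \<Rightarrow> (nat \<Rightarrow> nat \<Rightarrow> (nat \<Rightarrow> nat) \<Rightarrow> 'm) \<Rightarrow> bool" where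
  "Gop_functor C Yo Ym \<longleftrightarrow>
     (\<forall>n. Yo n \<in> Obj C) \<and>
     (\<forall>m n g. Gamma_hom m n g \<longrightarrow> Ym m n g \<in> hom C (Yo m) (Yo n)) \<and>
     (\<forall>m n g g'. Gamma_hom m n g \<and> (\<forall>i\<le>m. g i = g' i) \<longrightarrow> Ym m n g = Ym m n g') \<and>
     (\<forall>n. Ym n n id = Id C (Yo n)) \<and>
     (\<forall>l m n f g. Gamma_hom l m f \<and> Gamma_hom m n g \<longrightarrow>
        Ym l n (g \<circ> f) = Comp C (Ym m n g) (Ym l m f))"

definition pi1 :: "nat \<Rightarrow> nat \<Rightarrow> nat \<Rightarrow> nat" where
  "pi1 m n i = (if i \<le> m then i else 0)"

definition pi2 :: "nat \<Rightarrow> nat \<Rightarrow> nat \<Rightarrow> nat" where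
  "pi2 m n i = (if i \<le> m then 0 else i - m)"

definition rho :: "nat \<Rightarrow> nat \<Rightarrow> nat \<Rightarrow> nat" where
  "rho n j i = (if i = j + 1 then 1 else 0)"

definition g_of :: "(nat \<Rightarrow> nat) \<Rightarrow> nat \<Rightarrow> nat" where
  "g_of f i = (if i = 0 then 0 else 1 + f (i - 1))"

definition X_ob :: "(nat \<Rightarrow> 'o) \<Rightarrow> nat \<Rightarrow> 'o" where
  "X_ob Yo n = Yo n"

definition X_mor :: "(nat \<Rightarrow> nat \<Rightarrow> (nat \<Rightarrow> nat) \<Rightarrow> 'm) \<Rightarrow> nat \<Rightarrow> nat \<Rightarrow> (nat \<Rightarrow> nat) \<Rightarrow> 'm" where
  "X_mor Ym n n' f = Ym n n' (g_of f)"

definition xi0 :: "('o,'m) cartesian \<Rightarrow> (nat \<Rightarrow> 'o) \<Rightarrow> 'm" where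
  "xi0 K Yo = Bang K (X_ob Yo 0)"

definition xi :: "('o,'m) cartesian \<Rightarrow> (nat \<Rightarrow> nat \<Rightarrow> (nat \<Rightarrow> nat) \<Rightarrow> 'm) \<Rightarrow> nat \<Rightarrow> nat \<Rightarrow> 'm" where
  "xi K Ym m n = Pair K (Ym (m + n) m (pi1 m n)) (Ym (m + n) n (pi2 m n))"

fun power :: "('o,'m) cartesian \<Rightarrow> 'o \<Rightarrow> nat \<Rightarrow> 'o" where
  "power K b 0 = Term K"
| "power K b (Suc n) = Prod K b (power K b n)"

fun tuple :: "('o,'m) cartesian \<Rightarrow> 'o \<Rightarrow> (nat \<Rightarrow> 'm) \<Rightarrow> nat \<Rightarrow> 'm" where
  "tuple K a fs 0 = Bang K a"
| "tuple K a fs (Suc n) = Pair K (fs 0) (tuple K a (\<lambda>i. fs (Suc i)) n)"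

end

theory Submission
  imports Defs
begin


locale CC =
  fixes C :: "('o,'m) cat" and K :: "('o,'m) cartesian" and E :: "'m set"
  assumes cce: "cartesian_cat_with_equivalences C K E"
begin

lemma cat: "category C" and cs: "cartesian_structure C K"
  using cce unfolding cartesian_cat_with_equivalences_def by auto

lemma hom_obj: "f \<in> hom C a b \<Longrightarrow> a \<in> Obj C \<and> b \<in> Obj C"
  using cat unfolding category_def hom_def by auto

lemma comp_hom: "f \<in> hom C a b \<Longrightarrow> g \<in> hom C b c \<Longrightarrow> Comp C g f \<in> hom C a c"
  using cat unfolding category_def hom_def by auto

lemma id_hom: "a \<in> Obj C \<Longrightarrow> Id C a \<in> hom C a a"
  using cat unfolding category_def by auto

lemma id_left: "f \<in> hom C a b \<Longrightarrow> Comp C (Id C b) f = f"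
  using cat unfolding category_def hom_def by auto

lemma id_right: "f \<in> hom C a b \<Longrightarrow> Comp C f (Id C a) = f"
  using cat unfolding category_def hom_def by auto

lemma cassoc: "f \<in> hom C a b \<Longrightarrow> g \<in> hom C b c \<Longrightarrow> h \<in> hom C c d \<Longrightarrow>
   Comp C h (Comp C g f) = Comp C (Comp C h g) f"
  using cat unfolding category_def hom_def by auto

lemma prod_obj: "a \<in> Obj C \<Longrightarrow> b \<in> Obj C \<Longrightarrow> Prod K a b \<in> Obj C"
  using cs unfolding cartesian_structure_def by auto
lemma pr1_hom: "a \<in> Obj C \<Longrightarrow> b \<in> Obj C \<Longrightarrow> Pr1 K a b \<in> hom C (Prod K a b) a"
  using cs unfolding cartesian_structure_def by auto
lemma pr2_hom: "a \<in> Obj C \<Longrightarrow> b \<in> Obj C \<Longrightarrow> Pr2 K a b \<in> hom C (Prod K a b) b"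
  using cs unfolding cartesian_structure_def by auto

lemma cs_pair_all: "\<forall>a\<in>Obj C. \<forall>b\<in>Obj C. \<forall>c\<in>Obj C. \<forall>f\<in>hom C c a. \<forall>g\<in>hom C c b.
        Pair K f g \<in> hom C c (Prod K a b) \<and>
        Comp C (Pr1 K a b) (Pair K f g) = f \<and> Comp C (Pr2 K a b) (Pair K f g) = g \<and>
        (\<forall>h\<in>hom C c (Prod K a b). Comp C (Pr1 K a b) h = f \<and> Comp C (Pr2 K a b) h = g
             \<longrightarrow> h = Pair K f g)"
  using cs unfolding cartesian_structure_def by (rule conjunct1[OF conjunct2])

lemma cs_pair: assumes f: "f \<in> hom C c a" and g: "g \<in> hom C c b"
  shows "Pair K f g \<in> hom C c (Prod K a b) \<and>
        Comp C (Pr1 K a b) (Pair K f g) = f \<and> Comp C (Pr2 K a b) (Pair K f g) = g \<and>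
        (\<forall>h\<in>hom C c (Prod K a b). Comp C (Pr1 K a b) h = f \<and> Comp C (Pr2 K a b) h = g
             \<longrightarrow> h = Pair K f g)"
proof -
  have o: "a \<in> Obj C" "b \<in> Obj C" "c \<in> Obj C" using hom_obj f g by auto
  show ?thesis using cs_pair_all[rule_format, OF o(1) o(2) o(3) f g] .
qed

lemma pair_hom: "f \<in> hom C c a \<Longrightarrow> g \<in> hom C c b \<Longrightarrow> Pair K f g \<in> hom C c (Prod K a b)"
  using cs_pair by blast
lemma pr1_pair: "f \<in> hom C c a \<Longrightarrow> g \<in> hom C c b \<Longrightarrow> Comp C (Pr1 K a b) (Pair K f g) = f"
  using cs_pair by blast
lemma pr2_pair: "f \<in> hom C c a \<Longrightarrow> g \<in> hom C c b \<Longrightarrow> Comp C (Pr2 K a b) (Pair K f g) = g"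
  using cs_pair by blast
lemma pair_unique: "f \<in> hom C c a \<Longrightarrow> g \<in> hom C c b \<Longrightarrow> h \<in> hom C c (Prod K a b) \<Longrightarrow>
   Comp C (Pr1 K a b) h = f \<Longrightarrow> Comp C (Pr2 K a b) h = g \<Longrightarrow> h = Pair K f g"
  using cs_pair by blast

lemma term_obj: "Term K \<in> Obj C" using cs unfolding cartesian_structure_def by auto
lemma bang_hom: "a \<in> Obj C \<Longrightarrow> Bang K a \<in> hom C a (Term K)"
  using cs unfolding cartesian_structure_def by auto
lemma bang_unique: "a \<in> Obj C \<Longrightarrow> h \<in> hom C a (Term K) \<Longrightarrow> h = Bang K a"
  using cs unfolding cartesian_structure_def by auto

lemma pair_eta: "a \<in> Obj C \<Longrightarrow> b \<in> Obj C \<Longrightarrow> h \<in> hom C c (Prod K a b) \<Longrightarrow>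
   h = Pair K (Comp C (Pr1 K a b) h) (Comp C (Pr2 K a b) h)"
  by (rule pair_unique) (auto intro: comp_hom pr1_hom pr2_hom)

lemma pair_id: "a \<in> Obj C \<Longrightarrow> b \<in> Obj C \<Longrightarrow> Pair K (Pr1 K a b) (Pr2 K a b) = Id C (Prod K a b)"
proof -
  assume a: "a \<in> Obj C" and b: "b \<in> Obj C"
  have i: "Id C (Prod K a b) \<in> hom C (Prod K a b) (Prod K a b)" using id_hom[OF prod_obj[OF a b]] .
  have "Id C (Prod K a b) = Pair K (Comp C (Pr1 K a b) (Id C (Prod K a b))) (Comp C (Pr2 K a b) (Id C (Prod K a b)))"
    by (rule pair_eta[OF a b i])
  also have "\<dots> = Pair K (Pr1 K a b) (Pr2 K a b)"
    by (simp only: id_right[OF pr1_hom[OF a b]] id_right[OF pr2_hom[OF a b]])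
  finally show ?thesis by simp
qed

lemma pair_comp: "f \<in> hom C c a \<Longrightarrow> g \<in> hom C c b \<Longrightarrow> h \<in> hom C d c \<Longrightarrow>
   Comp C (Pair K f g) h = Pair K (Comp C f h) (Comp C g h)"
proof -
  assume f: "f \<in> hom C c a" and g: "g \<in> hom C c b" and h: "h \<in> hom C d c"
  have ab: "a \<in> Obj C" "b \<in> Obj C" using f g hom_obj by auto
  have p: "Pair K f g \<in> hom C c (Prod K a b)" using f g pair_hom by auto
  show ?thesis
    apply (rule pair_unique[OF comp_hom[OF h f] comp_hom[OF h g] comp_hom[OF h p]])
    using cassoc[OF h p pr1_hom[OF ab]] cassoc[OF h p pr2_hom[OF ab]] pr1_pair[OF f g] pr2_pair[OF f g]
    by auto
qed

lemma tensor_eq: "f \<in> hom C a b \<Longrightarrow> f' \<in> hom C a' b' \<Longrightarrow>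
   tensor C K f f' = Pair K (Comp C f (Pr1 K a a')) (Comp C f' (Pr2 K a a'))"
  by (simp add: tensor_def hom_def)

lemma tensor_hom: "f \<in> hom C a b \<Longrightarrow> f' \<in> hom C a' b' \<Longrightarrow>
   tensor C K f f' \<in> hom C (Prod K a a') (Prod K b b')"
proof -
  assume f: "f \<in> hom C a b" and f': "f' \<in> hom C a' b'"
  have o: "a \<in> Obj C" "a' \<in> Obj C" using f f' hom_obj by auto
  show ?thesis unfolding tensor_eq[OF f f']
    by (rule pair_hom[OF comp_hom[OF pr1_hom[OF o] f] comp_hom[OF pr2_hom[OF o] f']])
qed

lemma tensor_pair: "f \<in> hom C a b \<Longrightarrow> f' \<in> hom C a' b' \<Longrightarrow> g \<in> hom C c a \<Longrightarrow> g' \<in> hom C c a' \<Longrightarrow>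
   Comp C (tensor C K f f') (Pair K g g') = Pair K (Comp C f g) (Comp C f' g')"
proof -
  assume f: "f \<in> hom C a b" and f': "f' \<in> hom C a' b'" and g: "g \<in> hom C c a" and g': "g' \<in> hom C c a'"
  have o: "a \<in> Obj C" "a' \<in> Obj C" using f f' hom_obj by auto
  have "Comp C (tensor C K f f') (Pair K g g')
     = Pair K (Comp C (Comp C f (Pr1 K a a')) (Pair K g g')) (Comp C (Comp C f' (Pr2 K a a')) (Pair K g g'))"
    unfolding tensor_eq[OF f f']
    by (rule pair_comp[OF comp_hom[OF pr1_hom[OF o] f] comp_hom[OF pr2_hom[OF o] f'] pair_hom[OF g g']])
  also have "\<dots> = Pair K (Comp C f g) (Comp C f' g')"
    using cassoc[OF pair_hom[OF g g'] pr1_hom[OF o] f] cassoc[OF pair_hom[OF g g'] pr2_hom[OF o] f']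
      pr1_pair[OF g g'] pr2_pair[OF g g'] by simp
  finally show ?thesis .
qed

lemma iso_E: "f \<in> hom C a b \<Longrightarrow> g \<in> hom C b a \<Longrightarrow> Comp C g f = Id C a \<Longrightarrow> Comp C f g = Id C b \<Longrightarrow> f \<in> E"
  using cce unfolding cartesian_cat_with_equivalences_def iso_def hom_def by auto

lemma comp_E: "f \<in> hom C a b \<Longrightarrow> g \<in> hom C b c \<Longrightarrow> f \<in> E \<Longrightarrow> g \<in> E \<Longrightarrow> Comp C g f \<in> E"
  using cce unfolding cartesian_cat_with_equivalences_def hom_def by auto

lemma cancel_E: "f \<in> hom C a b \<Longrightarrow> g \<in> hom C b c \<Longrightarrow> g \<in> E \<Longrightarrow> Comp C g f \<in> E \<Longrightarrow> f \<in> E"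
  using cce unfolding cartesian_cat_with_equivalences_def hom_def by auto

lemma tensor_E: "f \<in> E \<Longrightarrow> f' \<in> E \<Longrightarrow> tensor C K f f' \<in> E"
  using cce unfolding cartesian_cat_with_equivalences_def by auto

lemma id_E: "a \<in> Obj C \<Longrightarrow> Id C a \<in> E"
  by (rule iso_E[OF id_hom id_hom id_left[OF id_hom] id_left[OF id_hom]])

lemma pr2_term_E: assumes y: "y \<in> Obj C" shows "Pr2 K (Term K) y \<in> E"
proof -
  have p2: "Pr2 K (Term K) y \<in> hom C (Prod K (Term K) y) y" using pr2_hom[OF term_obj y] .
  have p1: "Pr1 K (Term K) y \<in> hom C (Prod K (Term K) y) (Term K)" using pr1_hom[OF term_obj y] .
  have q: "Pair K (Bang K y) (Id C y) \<in> hom C y (Prod K (Term K) y)"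
    using pair_hom[OF bang_hom[OF y] id_hom[OF y]] .
  have "Comp C (Pair K (Bang K y) (Id C y)) (Pr2 K (Term K) y)
     = Pair K (Comp C (Bang K y) (Pr2 K (Term K) y)) (Comp C (Id C y) (Pr2 K (Term K) y))"
    using pair_comp[OF bang_hom[OF y] id_hom[OF y] p2] .
  also have "\<dots> = Pair K (Pr1 K (Term K) y) (Pr2 K (Term K) y)"
    using bang_unique[OF prod_obj[OF term_obj y] comp_hom[OF p2 bang_hom[OF y]]]
      bang_unique[OF prod_obj[OF term_obj y] p1] id_left[OF p2] by simp
  also have "\<dots> = Id C (Prod K (Term K) y)" using pair_id[OF term_obj y] .
  finally show ?thesis
    using iso_E[OF p2 q] pr2_pair[OF bang_hom[OF y] id_hom[OF y]] by blast
qed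

definition assocm where
  "assocm a b c = Pair K (Pair K (Pr1 K a (Prod K b c)) (Comp C (Pr1 K b c) (Pr2 K a (Prod K b c))))
                         (Comp C (Pr2 K b c) (Pr2 K a (Prod K b c)))"
definition associ where
  "associ a b c = Pair K (Comp C (Pr1 K a b) (Pr1 K (Prod K a b) c))
                         (Pair K (Comp C (Pr2 K a b) (Pr1 K (Prod K a b) c)) (Pr2 K (Prod K a b) c))"

end


context CC begin

lemma assocm_pair:
  assumes x: "x \<in> hom C d a" and y: "y \<in> hom C d b" and z: "z \<in> hom C d c"
  shows "Comp C (assocm a b c) (Pair K x (Pair K y z)) = Pair K (Pair K x y) z"
proof -
  have o: "a \<in> Obj C" "b \<in> Obj C" "c \<in> Obj C" using x y z hom_obj by auto
  have bc: "Prod K b c \<in> Obj C" using prod_obj o by auto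
  have yz: "Pair K y z \<in> hom C d (Prod K b c)" using pair_hom[OF y z] .
  have p: "Pair K x (Pair K y z) \<in> hom C d (Prod K a (Prod K b c))" using pair_hom[OF x yz] .
  have P1: "Pr1 K a (Prod K b c) \<in> hom C (Prod K a (Prod K b c)) a" using pr1_hom[OF o(1) bc] .
  have P2: "Pr2 K a (Prod K b c) \<in> hom C (Prod K a (Prod K b c)) (Prod K b c)" using pr2_hom[OF o(1) bc] .
  have Q1: "Pr1 K b c \<in> hom C (Prod K b c) b" using pr1_hom[OF o(2,3)] .
  have Q2: "Pr2 K b c \<in> hom C (Prod K b c) c" using pr2_hom[OF o(2,3)] .
  have e1: "Comp C (Pr1 K a (Prod K b c)) (Pair K x (Pair K y z)) = x" using pr1_pair[OF x yz] .
  have e2: "Comp C (Comp C (Pr1 K b c) (Pr2 K a (Prod K b c))) (Pair K x (Pair K y z)) = y"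
    by (simp only: cassoc[OF p P2 Q1, symmetric] pr2_pair[OF x yz] pr1_pair[OF y z])
  have e3: "Comp C (Comp C (Pr2 K b c) (Pr2 K a (Prod K b c))) (Pair K x (Pair K y z)) = z"
    by (simp only: cassoc[OF p P2 Q2, symmetric] pr2_pair[OF x yz] pr2_pair[OF y z])
  have i1: "Pair K (Pr1 K a (Prod K b c)) (Comp C (Pr1 K b c) (Pr2 K a (Prod K b c))) \<in> hom C (Prod K a (Prod K b c)) (Prod K a b)"
    using pair_hom[OF P1 comp_hom[OF P2 Q1]] .
  show ?thesis unfolding assocm_def
    by (simp only: pair_comp[OF i1 comp_hom[OF P2 Q2] p] pair_comp[OF P1 comp_hom[OF P2 Q1] p] e1 e2 e3)
qed

lemma associ_pair:
  assumes x: "x \<in> hom C d a" and y: "y \<in> hom C d b" and z: "z \<in> hom C d c"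
  shows "Comp C (associ a b c) (Pair K (Pair K x y) z) = Pair K x (Pair K y z)"
proof -
  have o: "a \<in> Obj C" "b \<in> Obj C" "c \<in> Obj C" using x y z hom_obj by auto
  have ab: "Prod K a b \<in> Obj C" using prod_obj o by auto
  have xy: "Pair K x y \<in> hom C d (Prod K a b)" using pair_hom[OF x y] .
  have p: "Pair K (Pair K x y) z \<in> hom C d (Prod K (Prod K a b) c)" using pair_hom[OF xy z] .
  have P1: "Pr1 K (Prod K a b) c \<in> hom C (Prod K (Prod K a b) c) (Prod K a b)" using pr1_hom[OF ab o(3)] .
  have P2: "Pr2 K (Prod K a b) c \<in> hom C (Prod K (Prod K a b) c) c" using pr2_hom[OF ab o(3)] .
  have Q1: "Pr1 K a b \<in> hom C (Prod K a b) a" using pr1_hom[OF o(1,2)] .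
  have Q2: "Pr2 K a b \<in> hom C (Prod K a b) b" using pr2_hom[OF o(1,2)] .
  have e1: "Comp C (Pr2 K (Prod K a b) c) (Pair K (Pair K x y) z) = z" using pr2_pair[OF xy z] .
  have e2: "Comp C (Comp C (Pr1 K a b) (Pr1 K (Prod K a b) c)) (Pair K (Pair K x y) z) = x"
    by (simp only: cassoc[OF p P1 Q1, symmetric] pr1_pair[OF xy z] pr1_pair[OF x y])
  have e3: "Comp C (Comp C (Pr2 K a b) (Pr1 K (Prod K a b) c)) (Pair K (Pair K x y) z) = y"
    by (simp only: cassoc[OF p P1 Q2, symmetric] pr1_pair[OF xy z] pr2_pair[OF x y])
  have i1: "Pair K (Comp C (Pr2 K a b) (Pr1 K (Prod K a b) c)) (Pr2 K (Prod K a b) c) \<in> hom C (Prod K (Prod K a b) c) (Prod K b c)"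
    using pair_hom[OF comp_hom[OF P1 Q2] P2] .
  show ?thesis unfolding associ_def
    by (simp only: pair_comp[OF comp_hom[OF P1 Q1] i1 p] pair_comp[OF comp_hom[OF P1 Q2] P2 p] e1 e2 e3)
qed

lemma assocm_hom: assumes a: "a \<in> Obj C" and b: "b \<in> Obj C" and c: "c \<in> Obj C" shows
  "assocm a b c \<in> hom C (Prod K a (Prod K b c)) (Prod K (Prod K a b) c)"
  unfolding assocm_def by (rule pair_hom[OF pair_hom[OF pr1_hom[OF a prod_obj[OF b c]] comp_hom[OF pr2_hom[OF a prod_obj[OF b c]] pr1_hom[OF b c]]] comp_hom[OF pr2_hom[OF a prod_obj[OF b c]] pr2_hom[OF b c]]])

lemma associ_hom: assumes a: "a \<in> Obj C" and b: "b \<in> Obj C" and c: "c \<in> Obj C" shows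
  "associ a b c \<in> hom C (Prod K (Prod K a b) c) (Prod K a (Prod K b c))"
  unfolding associ_def by (rule pair_hom[OF comp_hom[OF pr1_hom[OF prod_obj[OF a b] c] pr1_hom[OF a b]] pair_hom[OF comp_hom[OF pr1_hom[OF prod_obj[OF a b] c] pr2_hom[OF a b]] pr2_hom[OF prod_obj[OF a b] c]]])

lemma assocm_E:
  assumes o: "a \<in> Obj C" "b \<in> Obj C" "c \<in> Obj C"
  shows "assocm a b c \<in> E"
proof -
  have bc: "Prod K b c \<in> Obj C" and ab: "Prod K a b \<in> Obj C" using prod_obj o by auto
  have P1: "Pr1 K a (Prod K b c) \<in> hom C (Prod K a (Prod K b c)) a" using pr1_hom[OF o(1) bc] .
  have P2: "Pr2 K a (Prod K b c) \<in> hom C (Prod K a (Prod K b c)) (Prod K b c)" using pr2_hom[OF o(1) bc] .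
  have Q1: "Pr1 K b c \<in> hom C (Prod K b c) b" using pr1_hom[OF o(2,3)] .
  have Q2: "Pr2 K b c \<in> hom C (Prod K b c) c" using pr2_hom[OF o(2,3)] .
  have R1: "Pr1 K (Prod K a b) c \<in> hom C (Prod K (Prod K a b) c) (Prod K a b)" using pr1_hom[OF ab o(3)] .
  have R2: "Pr2 K (Prod K a b) c \<in> hom C (Prod K (Prod K a b) c) c" using pr2_hom[OF ab o(3)] .
  have S1: "Pr1 K a b \<in> hom C (Prod K a b) a" using pr1_hom[OF o(1,2)] .
  have S2: "Pr2 K a b \<in> hom C (Prod K a b) b" using pr2_hom[OF o(1,2)] .
  have idA: "Pair K (Pr1 K a (Prod K b c)) (Pair K (Comp C (Pr1 K b c) (Pr2 K a (Prod K b c))) (Comp C (Pr2 K b c) (Pr2 K a (Prod K b c))))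
     = Id C (Prod K a (Prod K b c))"
  proof -
    have eq: "Pr2 K a (Prod K b c) = Pair K (Comp C (Pr1 K b c) (Pr2 K a (Prod K b c))) (Comp C (Pr2 K b c) (Pr2 K a (Prod K b c)))"
      by (rule pair_eta[OF o(2,3) P2])
    show ?thesis by (simp only: eq[symmetric] pair_id[OF o(1) bc])
  qed
  have idB: "Pair K (Pair K (Comp C (Pr1 K a b) (Pr1 K (Prod K a b) c)) (Comp C (Pr2 K a b) (Pr1 K (Prod K a b) c))) (Pr2 K (Prod K a b) c)
     = Id C (Prod K (Prod K a b) c)"
  proof -
    have eq: "Pr1 K (Prod K a b) c = Pair K (Comp C (Pr1 K a b) (Pr1 K (Prod K a b) c)) (Comp C (Pr2 K a b) (Pr1 K (Prod K a b) c))"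
      by (rule pair_eta[OF o(1,2) R1])
    show ?thesis by (simp only: eq[symmetric] pair_id[OF ab o(3)])
  qed
  have f: "assocm a b c \<in> hom C (Prod K a (Prod K b c)) (Prod K (Prod K a b) c)" using assocm_hom[OF o] .
  have g: "associ a b c \<in> hom C (Prod K (Prod K a b) c) (Prod K a (Prod K b c))" using associ_hom[OF o] .
  have 1: "Comp C (associ a b c) (assocm a b c) = Id C (Prod K a (Prod K b c))"
  proof -
    have "Comp C (associ a b c) (assocm a b c) = Comp C (Comp C (associ a b c) (assocm a b c)) (Id C (Prod K a (Prod K b c)))"
      using id_right[OF comp_hom[OF f g]] by simp
    also have "\<dots> = Comp C (associ a b c) (Comp C (assocm a b c) (Id C (Prod K a (Prod K b c))))"
      using cassoc[OF id_hom[OF prod_obj[OF o(1) bc]] f g] by simp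
    also have "\<dots> = Id C (Prod K a (Prod K b c))"
      apply (subst (1 2) idA[symmetric])
      by (simp only: assocm_pair[OF P1 comp_hom[OF P2 Q1] comp_hom[OF P2 Q2]]
        associ_pair[OF P1 comp_hom[OF P2 Q1] comp_hom[OF P2 Q2]])
    finally show ?thesis .
  qed
  have 2: "Comp C (assocm a b c) (associ a b c) = Id C (Prod K (Prod K a b) c)"
  proof -
    have "Comp C (assocm a b c) (associ a b c) = Comp C (Comp C (assocm a b c) (associ a b c)) (Id C (Prod K (Prod K a b) c))"
      using id_right[OF comp_hom[OF g f]] by simp
    also have "\<dots> = Comp C (assocm a b c) (Comp C (associ a b c) (Id C (Prod K (Prod K a b) c)))"
      using cassoc[OF id_hom[OF prod_obj[OF ab o(3)]] g f] by simp
    also have "\<dots> = Id C (Prod K (Prod K a b) c)"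
      apply (subst (1 2) idB[symmetric])
      by (simp only: assocm_pair[OF comp_hom[OF R1 S1] comp_hom[OF R1 S2] R2]
        associ_pair[OF comp_hom[OF R1 S1] comp_hom[OF R1 S2] R2])
    finally show ?thesis .
  qed
  show ?thesis using iso_E[OF f g 1 2] .
qed

lemma power_obj: "b \<in> Obj C \<Longrightarrow> power K b n \<in> Obj C"
  by (induction n) (auto simp: term_obj prod_obj)

lemma tuple_hom: "(\<forall>i<n. fs i \<in> hom C a b) \<Longrightarrow> a \<in> Obj C \<Longrightarrow> b \<in> Obj C \<Longrightarrow>
  tuple K a fs n \<in> hom C a (power K b n)"
proof (induction n arbitrary: fs)
  case 0 then show ?case by (simp add: bang_hom)
next
  case (Suc n) then show ?case by (simp add: pair_hom)
qed

lemma tuple_nat: "f \<in> hom C a c \<Longrightarrow> (\<forall>i<n. gs i \<in> hom C c b) \<Longrightarrow> b \<in> Obj C \<Longrightarrow>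
  Comp C (tuple K c gs n) f = tuple K a (\<lambda>i. Comp C (gs i) f) n"
proof (induction n arbitrary: gs)
  case 0
  have o: "a \<in> Obj C" "c \<in> Obj C" using 0 hom_obj by auto
  then show ?case using bang_unique[OF o(1) comp_hom[OF 0(1) bang_hom[OF o(2)]]] by simp
next
  case (Suc n)
  have o: "a \<in> Obj C" "c \<in> Obj C" using Suc hom_obj by auto
  have t: "tuple K c (\<lambda>i. gs (Suc i)) n \<in> hom C c (power K b n)"
    using tuple_hom[of n "\<lambda>i. gs (Suc i)" c b] Suc(3,4) o by auto
  have "Comp C (tuple K c gs (Suc n)) f = Pair K (Comp C (gs 0) f) (Comp C (tuple K c (\<lambda>i. gs (Suc i)) n) f)"
  proof -
    have g0: "gs 0 \<in> hom C c b" using Suc(3) by simp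
    show ?thesis by (simp add: pair_comp[OF g0 t Suc(2)])
  qed
  also have "\<dots> = tuple K a (\<lambda>i. Comp C (gs i) f) (Suc n)"
    using Suc.IH[of "\<lambda>i. gs (Suc i)"] Suc(2-4) by simp
  finally show ?case .
qed

end


locale CCY = CC C K E for C :: "('o,'m) cat" and K E +
  fixes Yo :: "nat \<Rightarrow> 'o" and Ym :: "nat \<Rightarrow> nat \<Rightarrow> (nat \<Rightarrow> nat) \<Rightarrow> 'm"
  assumes gf: "Gop_functor C Yo Ym"
begin

lemma one_plus[simp]: "1 + n = Suc (n::nat)" by simp

lemma Yo_obj: "Yo n \<in> Obj C" using gf unfolding Gop_functor_def by auto
lemma Y_hom: "Gamma_hom m n g \<Longrightarrow> Ym m n g \<in> hom C (Yo m) (Yo n)"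
  using gf unfolding Gop_functor_def by auto
lemma Y_cong: "Gamma_hom m n g \<Longrightarrow> (\<And>i. i \<le> m \<Longrightarrow> g i = g' i) \<Longrightarrow> Ym m n g = Ym m n g'"
  using gf unfolding Gop_functor_def by blast
lemma Y_id: "Ym n n id = Id C (Yo n)"
  using gf unfolding Gop_functor_def by blast
lemma Y_comp: "Gamma_hom l m f \<Longrightarrow> Gamma_hom m n g \<Longrightarrow> Ym l n (g \<circ> f) = Comp C (Ym m n g) (Ym l m f)"
  using gf unfolding Gop_functor_def by blast

lemma gh_pi1: "Gamma_hom (m + n) m (pi1 m n)" unfolding Gamma_hom_def pi1_def by auto
lemma gh_pi2: "Gamma_hom (m + n) n (pi2 m n)" unfolding Gamma_hom_def pi2_def by auto
lemma gh_rho: "Gamma_hom n 1 (rho n j)" unfolding Gamma_hom_def rho_def by auto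

lemma gh_pi1_1: "Gamma_hom (Suc k) 1 (pi1 1 k)" using gh_pi1[of 1 k] by simp
lemma gh_pi2_1: "Gamma_hom (Suc k) k (pi2 1 k)" using gh_pi2[of 1 k] by simp
lemma gh_pi1_S: "Gamma_hom (Suc (m + n)) (Suc m) (pi1 (Suc m) n)" using gh_pi1[of "Suc m" n] by simp
lemma gh_pi2_S: "Gamma_hom (Suc (m + n)) n (pi2 (Suc m) n)" using gh_pi2[of "Suc m" n] by simp

lemma xi_hom: "xi K Ym m n \<in> hom C (Yo (m + n)) (Prod K (Yo m) (Yo n))"
  unfolding xi_def using pair_hom[OF Y_hom[OF gh_pi1] Y_hom[OF gh_pi2]] .

abbreviation T where "T n \<equiv> tuple K (Yo n) (\<lambda>j. Ym n 1 (rho n j)) n"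

lemma T_hom: "T n \<in> hom C (Yo n) (power K (Yo 1) n)"
  using tuple_hom[of n _ "Yo n" "Yo 1"] Y_hom[OF gh_rho] Yo_obj by auto

lemma tuple_step: "T (Suc n) = Comp C (tensor C K (Id C (Yo 1)) (T n)) (xi K Ym 1 n)"
proof -
  have p1: "Ym (Suc n) 1 (pi1 1 n) \<in> hom C (Yo (Suc n)) (Yo 1)" using Y_hom[OF gh_pi1_1[of n]] by simp
  have p2: "Ym (Suc n) n (pi2 1 n) \<in> hom C (Yo (Suc n)) (Yo n)" using Y_hom[OF gh_pi2_1[of n]] by simp
  have "Comp C (tensor C K (Id C (Yo 1)) (T n)) (xi K Ym 1 n)
      = Comp C (tensor C K (Id C (Yo 1)) (T n)) (Pair K (Ym (Suc n) 1 (pi1 1 n)) (Ym (Suc n) n (pi2 1 n)))"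
    unfolding xi_def by simp
  also have "\<dots> = Pair K (Comp C (Id C (Yo 1)) (Ym (Suc n) 1 (pi1 1 n))) (Comp C (T n) (Ym (Suc n) n (pi2 1 n)))"
    by (rule tensor_pair[OF id_hom[OF Yo_obj] T_hom p1 p2])
  also have "\<dots> = Pair K (Ym (Suc n) 1 (pi1 1 n)) (tuple K (Yo (Suc n)) (\<lambda>i. Comp C (Ym n 1 (rho n i)) (Ym (Suc n) n (pi2 1 n))) n)"
    using id_left[OF p1] tuple_nat[OF p2, of n "\<lambda>j. Ym n 1 (rho n j)" "Yo 1"] Y_hom[OF gh_rho] Yo_obj by simp
  also have "\<dots> = T (Suc n)"
  proof -
    have a: "Ym (Suc n) 1 (pi1 1 n) = Ym (Suc n) 1 (rho (Suc n) 0)"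
      by (rule Y_cong) (auto simp: Gamma_hom_def pi1_def rho_def)
    have b: "Comp C (Ym n 1 (rho n i)) (Ym (Suc n) n (pi2 1 n)) = Ym (Suc n) 1 (rho (Suc n) (Suc i))" for i
    proof -
      have "Comp C (Ym n 1 (rho n i)) (Ym (Suc n) n (pi2 1 n)) = Ym (Suc n) 1 (rho n i \<circ> pi2 1 n)"
        using Y_comp[OF gh_pi2_1[of n] gh_rho[of n i]] by simp
      also have "\<dots> = Ym (Suc n) 1 (rho (Suc n) (Suc i))"
        by (rule Y_cong) (auto simp: Gamma_hom_def pi2_def rho_def)
      finally show ?thesis .
    qed
    show ?thesis using a b by simp
  qed
  finally show ?thesis by simp
qed

lemma xi0_E: "Comp C (Pr2 K (Yo 0) (Yo n)) (xi K Ym 0 n) = Id C (Yo n)"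
proof -
  have "Comp C (Pr2 K (Yo 0) (Yo n)) (xi K Ym 0 n) = Ym n n (pi2 0 n)"
    unfolding xi_def using pr2_pair[OF Y_hom[OF gh_pi1[of 0 n]] Y_hom[OF gh_pi2[of 0 n]]] by simp
  also have "\<dots> = Ym n n id"
    by (rule Y_cong) (auto simp: Gamma_hom_def pi2_def)
  finally show ?thesis using Y_id by simp
qed

lemma pr2_E: assumes "Bang K (Yo 0) \<in> E" shows "Pr2 K (Yo 0) (Yo n) \<in> E"
proof -
  have o: "Yo 0 \<in> Obj C" "Yo n \<in> Obj C" using Yo_obj by auto
  have tb: "tensor C K (Bang K (Yo 0)) (Id C (Yo n)) \<in> hom C (Prod K (Yo 0) (Yo n)) (Prod K (Term K) (Yo n))"
    using tensor_hom[OF bang_hom[OF o(1)] id_hom[OF o(2)]] .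
  have "Comp C (Pr2 K (Term K) (Yo n)) (tensor C K (Bang K (Yo 0)) (Id C (Yo n)))
     = Comp C (Id C (Yo n)) (Pr2 K (Yo 0) (Yo n))"
    unfolding tensor_eq[OF bang_hom[OF o(1)] id_hom[OF o(2)]]
    by (rule pr2_pair[OF comp_hom[OF pr1_hom[OF o] bang_hom[OF o(1)]] comp_hom[OF pr2_hom[OF o] id_hom[OF o(2)]]])
  also have "\<dots> = Pr2 K (Yo 0) (Yo n)" using id_left[OF pr2_hom[OF o]] .
  finally have eq: "Comp C (Pr2 K (Term K) (Yo n)) (tensor C K (Bang K (Yo 0)) (Id C (Yo n))) = Pr2 K (Yo 0) (Yo n)" .
  have "Comp C (Pr2 K (Term K) (Yo n)) (tensor C K (Bang K (Yo 0)) (Id C (Yo n))) \<in> E"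
    by (rule comp_E[OF tb pr2_hom[OF term_obj o(2)] tensor_E[OF assms id_E[OF o(2)]] pr2_term_E[OF o(2)]])
  then show ?thesis using eq by simp
qed

lemma xi_assoc:
  "Comp C (tensor C K (xi K Ym 1 m) (Id C (Yo n))) (xi K Ym (Suc m) n)
 = Comp C (assocm (Yo 1) (Yo m) (Yo n)) (Comp C (tensor C K (Id C (Yo 1)) (xi K Ym m n)) (xi K Ym 1 (m + n)))"
proof -
  have h1: "Ym (Suc (m + n)) (Suc m) (pi1 (Suc m) n) \<in> hom C (Yo (Suc (m + n))) (Yo (Suc m))"
    using Y_hom[OF gh_pi1_S[of m n]] by simp
  have h2: "Ym (Suc (m + n)) n (pi2 (Suc m) n) \<in> hom C (Yo (Suc (m + n))) (Yo n)"
    using Y_hom[OF gh_pi2_S[of m n]] by simp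
  have h3: "Ym (Suc m) 1 (pi1 1 m) \<in> hom C (Yo (Suc m)) (Yo 1)"
    using Y_hom[OF gh_pi1_1[of m]] by simp
  have h4: "Ym (Suc m) m (pi2 1 m) \<in> hom C (Yo (Suc m)) (Yo m)"
    using Y_hom[OF gh_pi2_1[of m]] by simp
  have h5: "Ym (Suc (m + n)) 1 (pi1 1 (m + n)) \<in> hom C (Yo (Suc (m + n))) (Yo 1)"
    using Y_hom[OF gh_pi1_1[of "m + n"]] by simp
  have h6: "Ym (Suc (m + n)) (m + n) (pi2 1 (m + n)) \<in> hom C (Yo (Suc (m + n))) (Yo (m + n))"
    using Y_hom[OF gh_pi2_1[of "m + n"]] by simp
  have h7: "Ym (m + n) m (pi1 m n) \<in> hom C (Yo (m + n)) (Yo m)" using Y_hom[OF gh_pi1] .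
  have h8: "Ym (m + n) n (pi2 m n) \<in> hom C (Yo (m + n)) (Yo n)" using Y_hom[OF gh_pi2] .
  have x1m: "xi K Ym 1 m = Pair K (Ym (Suc m) 1 (pi1 1 m)) (Ym (Suc m) m (pi2 1 m))"
    unfolding xi_def by simp
  have xsm: "xi K Ym (Suc m) n = Pair K (Ym (Suc (m + n)) (Suc m) (pi1 (Suc m) n)) (Ym (Suc (m + n)) n (pi2 (Suc m) n))"
    unfolding xi_def by simp
  have x1mn: "xi K Ym 1 (m + n) = Pair K (Ym (Suc (m + n)) 1 (pi1 1 (m + n))) (Ym (Suc (m + n)) (m + n) (pi2 1 (m + n)))"
    unfolding xi_def by simp
  have xmn: "xi K Ym m n = Pair K (Ym (m + n) m (pi1 m n)) (Ym (m + n) n (pi2 m n))"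
    unfolding xi_def by simp
  have c1: "Comp C (Ym (Suc m) 1 (pi1 1 m)) (Ym (Suc (m + n)) (Suc m) (pi1 (Suc m) n)) = Ym (Suc (m + n)) 1 (pi1 1 (m + n))"
  proof -
    have "Comp C (Ym (Suc m) 1 (pi1 1 m)) (Ym (Suc (m + n)) (Suc m) (pi1 (Suc m) n)) = Ym (Suc (m + n)) 1 (pi1 1 m \<circ> pi1 (Suc m) n)"
      using Y_comp[OF gh_pi1_S[of m n] gh_pi1_1[of m]] by simp
    also have "\<dots> = Ym (Suc (m + n)) 1 (pi1 1 (m + n))"
      by (rule Y_cong) (auto simp: Gamma_hom_def pi1_def)
    finally show ?thesis .
  qed
  have c2: "Comp C (Ym (Suc m) m (pi2 1 m)) (Ym (Suc (m + n)) (Suc m) (pi1 (Suc m) n))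
          = Comp C (Ym (m + n) m (pi1 m n)) (Ym (Suc (m + n)) (m + n) (pi2 1 (m + n)))"
  proof -
    have "Comp C (Ym (Suc m) m (pi2 1 m)) (Ym (Suc (m + n)) (Suc m) (pi1 (Suc m) n)) = Ym (Suc (m + n)) m (pi2 1 m \<circ> pi1 (Suc m) n)"
      using Y_comp[OF gh_pi1_S[of m n] gh_pi2_1[of m]] by simp
    also have "\<dots> = Ym (Suc (m + n)) m (pi1 m n \<circ> pi2 1 (m + n))"
      by (rule Y_cong) (auto simp: Gamma_hom_def pi1_def pi2_def)
    also have "\<dots> = Comp C (Ym (m + n) m (pi1 m n)) (Ym (Suc (m + n)) (m + n) (pi2 1 (m + n)))"
      using Y_comp[OF gh_pi2_1[of "m + n"] gh_pi1[of m n]] by simp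
    finally show ?thesis .
  qed
  have c3: "Ym (Suc (m + n)) n (pi2 (Suc m) n)
          = Comp C (Ym (m + n) n (pi2 m n)) (Ym (Suc (m + n)) (m + n) (pi2 1 (m + n)))"
  proof -
    have "Ym (Suc (m + n)) n (pi2 (Suc m) n) = Ym (Suc (m + n)) n (pi2 m n \<circ> pi2 1 (m + n))"
      by (rule Y_cong) (auto simp: Gamma_hom_def pi2_def)
    also have "\<dots> = Comp C (Ym (m + n) n (pi2 m n)) (Ym (Suc (m + n)) (m + n) (pi2 1 (m + n)))"
      using Y_comp[OF gh_pi2_1[of "m + n"] gh_pi2[of m n]] by simp
    finally show ?thesis .
  qed
  have x1m_hom: "xi K Ym 1 m \<in> hom C (Yo (Suc m)) (Prod K (Yo 1) (Yo m))" using xi_hom[of 1 m] by simp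
  have "Comp C (tensor C K (xi K Ym 1 m) (Id C (Yo n))) (xi K Ym (Suc m) n)
     = Pair K (Comp C (xi K Ym 1 m) (Ym (Suc (m + n)) (Suc m) (pi1 (Suc m) n))) (Comp C (Id C (Yo n)) (Ym (Suc (m + n)) n (pi2 (Suc m) n)))"
    unfolding xsm by (rule tensor_pair[OF x1m_hom id_hom[OF Yo_obj] h1 h2])
  also have "\<dots> = Pair K (Pair K (Ym (Suc (m + n)) 1 (pi1 1 (m + n)))
        (Comp C (Ym (m + n) m (pi1 m n)) (Ym (Suc (m + n)) (m + n) (pi2 1 (m + n)))))
      (Comp C (Ym (m + n) n (pi2 m n)) (Ym (Suc (m + n)) (m + n) (pi2 1 (m + n))))"
    unfolding x1m using pair_comp[OF h3 h4 h1] c1 c2 c3 id_left[OF h2] by simp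
  also have "\<dots> = Comp C (assocm (Yo 1) (Yo m) (Yo n)) (Pair K (Ym (Suc (m + n)) 1 (pi1 1 (m + n)))
       (Pair K (Comp C (Ym (m + n) m (pi1 m n)) (Ym (Suc (m + n)) (m + n) (pi2 1 (m + n))))
               (Comp C (Ym (m + n) n (pi2 m n)) (Ym (Suc (m + n)) (m + n) (pi2 1 (m + n))))))"
    by (rule assocm_pair[symmetric, OF h5 comp_hom[OF h6 h7] comp_hom[OF h6 h8]])
  also have "Pair K (Ym (Suc (m + n)) 1 (pi1 1 (m + n)))
       (Pair K (Comp C (Ym (m + n) m (pi1 m n)) (Ym (Suc (m + n)) (m + n) (pi2 1 (m + n))))
               (Comp C (Ym (m + n) n (pi2 m n)) (Ym (Suc (m + n)) (m + n) (pi2 1 (m + n)))))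
     = Comp C (tensor C K (Id C (Yo 1)) (xi K Ym m n)) (xi K Ym 1 (m + n))"
    unfolding x1mn
    using tensor_pair[OF id_hom[OF Yo_obj] xi_hom h5 h6] id_left[OF h5] pair_comp[OF h7 h8 h6]
    unfolding xmn by simp
  finally show ?thesis .
qed

lemma main23:
  "((\<forall>m n. xi K Ym m n \<in> E) \<and> Bang K (Yo 0) \<in> E) \<longleftrightarrow> (\<forall>n. T n \<in> E)"
proof
  assume A: "(\<forall>m n. xi K Ym m n \<in> E) \<and> Bang K (Yo 0) \<in> E"
  show "\<forall>n. T n \<in> E"
  proof
    fix n show "T n \<in> E"
    proof (induction n)
      case 0 then show ?case using A by simp
    next
      case (Suc n)
      have "Comp C (tensor C K (Id C (Yo 1)) (T n)) (xi K Ym 1 n) \<in> E"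
        apply (rule comp_E[OF _ tensor_hom[OF id_hom[OF Yo_obj] T_hom]])
        using xi_hom[of 1 n] A tensor_E[OF id_E[OF Yo_obj] Suc] by auto
      then show ?case by (simp only: tuple_step)
    qed
  qed
next
  assume B: "\<forall>n. T n \<in> E"
  have bang: "Bang K (Yo 0) \<in> E" using B[rule_format, of 0] by simp
  have x1: "xi K Ym 1 k \<in> E" for k
    apply (rule cancel_E[OF _ tensor_hom[OF id_hom[OF Yo_obj] T_hom, of 1 k]])
      using xi_hom[of 1 k] apply simp
    using tensor_E[OF id_E[OF Yo_obj] B[rule_format, of k]] apply simp
    using B[rule_format, of "Suc k"] by (simp only: tuple_step)
  have "xi K Ym m n \<in> E" for m n
  proof (induction m arbitrary: n)
    case 0
    show ?case
      apply (rule cancel_E[OF _ pr2_hom[OF Yo_obj Yo_obj] pr2_E[OF bang]])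
      using xi_hom[of 0 n] xi0_E[of n] id_E[OF Yo_obj] by auto
  next
    case (Suc m)
    have X1: "xi K Ym 1 (m + n) \<in> hom C (Yo (Suc (m + n))) (Prod K (Yo 1) (Yo (m + n)))"
      using xi_hom[of 1 "m + n"] by simp
    have TX: "tensor C K (Id C (Yo 1)) (xi K Ym m n) \<in> hom C (Prod K (Yo 1) (Yo (m + n))) (Prod K (Yo 1) (Prod K (Yo m) (Yo n)))"
      using tensor_hom[OF id_hom[OF Yo_obj] xi_hom] .
    have R1: "Comp C (tensor C K (Id C (Yo 1)) (xi K Ym m n)) (xi K Ym 1 (m + n)) \<in> E"
      by (rule comp_E[OF X1 TX x1 tensor_E[OF id_E[OF Yo_obj] Suc.IH]])
    have R: "Comp C (assocm (Yo 1) (Yo m) (Yo n)) (Comp C (tensor C K (Id C (Yo 1)) (xi K Ym m n)) (xi K Ym 1 (m + n))) \<in> E"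
      by (rule comp_E[OF comp_hom[OF X1 TX] assocm_hom[OF Yo_obj Yo_obj Yo_obj] R1 assocm_E[OF Yo_obj Yo_obj Yo_obj]])
    have XS: "xi K Ym (Suc m) n \<in> hom C (Yo (Suc (m + n))) (Prod K (Yo (Suc m)) (Yo n))"
      using xi_hom[of "Suc m" n] by simp
    have X1m: "xi K Ym 1 m \<in> hom C (Yo (Suc m)) (Prod K (Yo 1) (Yo m))"
      using xi_hom[of 1 m] by simp
    show ?case
      apply (rule cancel_E[OF XS tensor_hom[OF X1m id_hom[OF Yo_obj]] tensor_E[OF x1 id_E[OF Yo_obj]]])
      using R by (simp only: xi_assoc)
  qed
  then show "(\<forall>m n. xi K Ym m n \<in> E) \<and> Bang K (Yo 0) \<in> E" using bang by auto
qed

end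

theorem proposition3p1p2:
  fixes C :: "('o,'m) cat" and K :: "('o,'m) cartesian" and E :: "'m set"
    and Yo :: "nat \<Rightarrow> 'o" and Ym :: "nat \<Rightarrow> nat \<Rightarrow> (nat \<Rightarrow> nat) \<Rightarrow> 'm"
  assumes "cartesian_cat_with_equivalences C K E"
    and "Gop_functor C Yo Ym"
  shows "((xi0 K Yo \<in> E \<and> (\<forall>m n. xi K Ym m n \<in> E))
          \<longleftrightarrow> ((\<forall>m n. Pair K (Ym (m + n) m (pi1 m n)) (Ym (m + n) n (pi2 m n)) \<in> E)
               \<and> Bang K (Yo 0) \<in> E))
       \<and> (((\<forall>m n. Pair K (Ym (m + n) m (pi1 m n)) (Ym (m + n) n (pi2 m n)) \<in> E)
               \<and> Bang K (Yo 0) \<in> E)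
          \<longleftrightarrow> (\<forall>n. tuple K (Yo n) (\<lambda>j. Ym n 1 (rho n j)) n \<in> E))"
proof -
  interpret CCY C K E Yo Ym
    by (unfold_locales) (use assms in auto)
  show ?thesis using main23 unfolding xi_def xi0_def X_ob_def by auto
qed

end
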